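(* $\mathcal{H}_{R_0,r}(q)$ is isomorphic as an $R_0$-algebra to the $\mathbb{Z}_2$-crossed product $\mathcal{H}^1_{R_0,r}(q)^{\psi_0}_{\alpha_0}[\mathbb{Z}_2]$; an isomorphism is given by $a_1u_1+a_2u_{-1}\mapsto a_1+a_2T'_1$ ($a_1,a_2\in\mathcal{H}^1_{R_0,r}(q)$). In particular $\mathcal{H}_{R_0,r}(q)=\mathcal{H}^1_{R_0,r}(q)\oplus\mathcal{H}^1_{R_0,r}(q)T'_1$.
   Context: $R_0$ is a commutative domain with invertible elements $q$, $2$, $q+q^{-1}$; $r\ge2$; $\mathcal{H}_{R_0,r}(q)$ is the type $A$ Iwahori–Hecke algebra with generators $T_1,\dots,T_{r-1}$, relations $T_i^2=(q-q^{-1})T_i+1$, $T_iT_{i+1}T_i=T_{i+1}T_iT_{i+1}$, $T_iT_j=T_jT_i$ ($|i-j|>1$); $T'_i=\frac{2T_i-(q-q^{-1})}{q+q^{-1}}$; the Goldman involution is the algebra automorphism with $\hat T_i=(q-q^{-1})-T_i$, and $\mathcal{H}^1_{R_0,r}(q)=\{X:\hat X=X\}$. $\mathbb{Z}_2=\{1,-1\}$ multiplicatively. $\psi_0(1)=\mathrm{id}$, $\psi_0(-1)(T)=T'_1TT'_1$, $\alpha_0\equiv1$. For a crossed system $(A,G,\psi,\alpha)$ (maps $\psi:G\to\operatorname{Aut}(A)$, ${}^\sigma a:=\psi(\sigma)(a)$, and $\alpha:G\times G\to A^\times$ satisfying ${}^\sigma({}^\tau a)=\alpha(\sigma,\tau){}^{\sigma\tau}a\,\alpha(\sigma,\tau)^{-1}$,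 the cocycle identity ${}^{\sigma_1}\alpha(\sigma_2,\sigma_3)\alpha(\sigma_1,\sigma_2\sigma_3)=\alpha(\sigma_1,\sigma_2)\alpha(\sigma_1\sigma_2,\sigma_3)$, and $\alpha(\sigma,1)=\alpha(1,\sigma)=1$), the crossed product $A^\psi_\alpha[G]$ is the free left $A$-module with basis $\{u_\sigma:\sigma\in G\}$ and multiplication $(a_1u_\sigma)(a_2u_\tau)=a_1\,{}^\sigma a_2\,\alpha(\sigma,\tau)\,u_{\sigma\tau}$. *)

theory Defs
  imports "HOL-Library.Poly_Mapping"
begin

datatype word = Word "nat list"

fun letters :: "word \<Rightarrow> nat list" where
  "letters (Word xs) = xs"

instantiation word :: monoid_add
begin
definition zero_word :: word where "zero_word = Word []"
fun plus_word :: "word \<Rightarrow> word \<Rightarrow> word" where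
  "plus_word (Word a) (Word b) = Word (a @ b)"
instance
proof
  fix a b c :: word
  show "a + b + c = a + (b + c)" by (cases a; cases b; cases c) simp
  show "0 + a = a" by (cases a) (simp add: zero_word_def)
  show "a + 0 = a" by (cases a) (simp add: zero_word_def)
qed
end

text \<open>Noncommutative polynomials: finitely supported maps from words to coefficients;
  the product is concatenation-convolution, so this is the free R_0-algebra.\<close>
type_synonym 'r freealg = "word \<Rightarrow>\<^sub>0 'r"

definition fconst :: "'r::zero \<Rightarrow> 'r freealg" where
  "fconst c = Poly_Mapping.single (Word []) c"

definition gen :: "nat \<Rightarrow> 'r::{zero,one} freealg" where
  "gen i = Poly_Mapping.single (Word [i]) 1"

text \<open>The free algebra on the generators T_1, ..., T_{r-1}.\<close>
definition free_carrier :: "nat \<Rightarrow> ('r::zero freealg) set" where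
  "free_carrier r = {f. \<forall>w\<in>Poly_Mapping.keys f. set (letters w) \<subseteq> {1..<r}}"

text \<open>Defining relations of the Iwahori-Hecke algebra (qi plays the role of q^{-1}).\<close>
definition hecke_relators :: "'r::comm_ring_1 \<Rightarrow> 'r \<Rightarrow> nat \<Rightarrow> 'r freealg set" where
  "hecke_relators q qi r =
     {gen i * gen i - (fconst (q - qi) * gen i + 1) | i. 1 \<le> i \<and> i < r}
   \<union> {gen i * gen (i+1) * gen i - gen (i+1) * gen i * gen (i+1) | i. 1 \<le> i \<and> i + 1 < r}
   \<union> {gen i * gen j - gen j * gen i | i j. 1 \<le> i \<and> i < r \<and> 1 \<le> j \<and> j < r \<and> (i + 1 < j \<or> j + 1 < i)}"

inductive_set hecke_ideal :: "'r::comm_ring_1 \<Rightarrow> 'r \<Rightarrow> nat \<Rightarrow> 'r freealg set"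
  for q qi r where
  zero: "0 \<in> hecke_ideal q qi r"
| gen: "g \<in> hecke_relators q qi r \<Longrightarrow> a \<in> free_carrier r \<Longrightarrow> b \<in> free_carrier r
        \<Longrightarrow> a * g * b \<in> hecke_ideal q qi r"
| add: "x \<in> hecke_ideal q qi r \<Longrightarrow> y \<in> hecke_ideal q qi r \<Longrightarrow> x + y \<in> hecke_ideal q qi r"

text \<open>The Hecke algebra H_{R_0,r}(q) is free_carrier r modulo hecke_eq.\<close>
definition hecke_eq :: "'r::comm_ring_1 \<Rightarrow> 'r \<Rightarrow> nat \<Rightarrow> 'r freealg \<Rightarrow> 'r freealg \<Rightarrow> bool" where
  "hecke_eq q qi r x y \<longleftrightarrow> x - y \<in> hecke_ideal q qi r"

definition word_eval :: "(nat \<Rightarrow> 'r::comm_ring_1 freealg) \<Rightarrow> word \<Rightarrow> 'r freealg" where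
  "word_eval phi w = prod_list (map phi (letters w))"

definition free_eval :: "(nat \<Rightarrow> 'r::comm_ring_1 freealg) \<Rightarrow> 'r freealg \<Rightarrow> 'r freealg" where
  "free_eval phi f = (\<Sum>w\<in>Poly_Mapping.keys f. fconst (Poly_Mapping.lookup f w) * word_eval phi w)"

definition goldman :: "'r::comm_ring_1 \<Rightarrow> 'r \<Rightarrow> 'r freealg \<Rightarrow> 'r freealg" where
  "goldman q qi f = free_eval (\<lambda>i. fconst (q - qi) - gen i) f"

definition hecke1 :: "'r::comm_ring_1 \<Rightarrow> 'r \<Rightarrow> nat \<Rightarrow> 'r freealg set" where
  "hecke1 q qi r = {X \<in> free_carrier r. hecke_eq q qi r (goldman q qi X) X}"

text \<open>T'_1 = (2 T_1 - (q - q^{-1})) / (q + q^{-1}); e plays the role of (q + q^{-1})^{-1}.\<close>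
definition Tprime :: "'r::comm_ring_1 \<Rightarrow> 'r \<Rightarrow> 'r \<Rightarrow> 'r freealg" where
  "Tprime e q qi = fconst e * (2 * gen 1 - fconst (q - qi))"

definition Z2 :: "int set" where "Z2 = {1, -1}"

definition psi0 :: "'a::ring_1 \<Rightarrow> int \<Rightarrow> 'a \<Rightarrow> 'a" where
  "psi0 T \<sigma> X = (if \<sigma> = 1 then X else T * X * T)"

definition alpha0 :: "int \<Rightarrow> int \<Rightarrow> 'a::ring_1" where
  "alpha0 \<sigma> \<tau> = 1"

text \<open>Elements of A^psi_alpha[G]: sum over sigma of x(sigma) u_sigma, with x(sigma) \<in> A.\<close>
definition cp_carrier :: "'g set \<Rightarrow> 'a::zero set \<Rightarrow> ('g \<Rightarrow> 'a) set" where
  "cp_carrier G A = {x. (\<forall>\<sigma>\<in>G. x \<sigma> \<in> A) \<and> (\<forall>\<sigma>. \<sigma> \<notin> G \<longrightarrow> x \<sigma> = 0)}"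

definition cp_mult :: "'g::monoid_mult set \<Rightarrow> ('g \<Rightarrow> 'a \<Rightarrow> 'a) \<Rightarrow> ('g \<Rightarrow> 'g \<Rightarrow> 'a::ring_1)
                        \<Rightarrow> ('g \<Rightarrow> 'a) \<Rightarrow> ('g \<Rightarrow> 'a) \<Rightarrow> ('g \<Rightarrow> 'a)" where
  "cp_mult G psi alpha x y =
     (\<lambda>\<rho>. \<Sum>\<sigma>\<in>G. \<Sum>\<tau>\<in>G. if \<sigma> * \<tau> = \<rho> then x \<sigma> * psi \<sigma> (y \<tau>) * alpha \<sigma> \<tau> else 0)"

definition cp_one :: "'g::monoid_mult \<Rightarrow> 'a::ring_1" where
  "cp_one = (\<lambda>\<sigma>. if \<sigma> = 1 then 1 else 0)"

definition cp_add :: "('g \<Rightarrow> 'a::plus) \<Rightarrow> ('g \<Rightarrow> 'a) \<Rightarrow> ('g \<Rightarrow> 'a)" where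
  "cp_add x y = (\<lambda>\<sigma>. x \<sigma> + y \<sigma>)"

definition cp_smult :: "'r::comm_ring_1 \<Rightarrow> (int \<Rightarrow> 'r freealg) \<Rightarrow> (int \<Rightarrow> 'r freealg)" where
  "cp_smult c x = (\<lambda>\<sigma>. fconst c * x \<sigma>)"

definition Phi :: "'a::ring_1 \<Rightarrow> (int \<Rightarrow> 'a) \<Rightarrow> 'a" where
  "Phi T x = x 1 + x (-1) * T"

end

theory Submission
  imports Defs
begin

lemma poly_sum_single:
  fixes f :: "'a \<Rightarrow>\<^sub>0 'b::comm_monoid_add"
  shows "f = (\<Sum>k\<in>Poly_Mapping.keys f. Poly_Mapping.single k (Poly_Mapping.lookup f k))"
proof (rule poly_mapping_eqI)
  fix x
  show "Poly_Mapping.lookup f x = Poly_Mapping.lookup (\<Sum>k\<in>Poly_Mapping.keys f. Poly_Mapping.single k (Poly_Mapping.lookup f k)) x"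
    by (simp add: lookup_sum lookup_single when_def in_keys_iff)
qed

lemma fconst_mult: "fconst (a::'r::comm_ring_1) * fconst b = fconst (a*b)"
  by (simp add: fconst_def mult_single zero_word_def[symmetric])

lemma fconst_add: "fconst (a::'r::comm_ring_1) + fconst b = fconst (a+b)"
  by (simp add: fconst_def single_add)
lemma fconst_diff: "fconst (a::'r::comm_ring_1) - fconst b = fconst (a-b)"
  by (simp add: fconst_def single_diff)
lemma fconst_uminus: "- fconst (a::'r::comm_ring_1) = fconst (-a)"
  by (simp add: fconst_def single_uminus)
lemma fconst_0[simp]: "fconst 0 = 0" by (simp add: fconst_def)
lemma fconst_1[simp]: "fconst (1::'r::comm_ring_1) = 1" by (simp add: fconst_def zero_word_def[symmetric])

lemma fconst_single: "fconst (c::'r::comm_ring_1) * Poly_Mapping.single w d = Poly_Mapping.single w (c*d)"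
  by (simp add: fconst_def mult_single zero_word_def[symmetric])
lemma single_fconst: "Poly_Mapping.single w d * fconst (c::'r::comm_ring_1) = Poly_Mapping.single w (c*d)"
  by (simp add: fconst_def mult_single zero_word_def[symmetric] mult.commute)

lemma fconst_central: "fconst (c::'r::comm_ring_1) * x = x * fconst c"
proof -
  have "fconst c * x = (\<Sum>k\<in>Poly_Mapping.keys x. fconst c * Poly_Mapping.single k (Poly_Mapping.lookup x k))"
    by (subst poly_sum_single[of x]) (simp add: sum_distrib_left)
  also have "\<dots> = (\<Sum>k\<in>Poly_Mapping.keys x. Poly_Mapping.single k (Poly_Mapping.lookup x k) * fconst c)"
    by (simp add: fconst_single single_fconst)
  also have "\<dots> = x * fconst c"
    by (subst (2) poly_sum_single[of x]) (simp add: sum_distrib_right)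
  finally show ?thesis .
qed

lemma letters_plus[simp]: "letters (a + b) = letters a @ letters b"
  by (cases a; cases b) simp

lemma carrier_iff: "f \<in> free_carrier r \<longleftrightarrow> (\<forall>w\<in>Poly_Mapping.keys f. set (letters w) \<subseteq> {1..<r})"
  by (simp add: free_carrier_def)

lemma carrier_0[simp]: "0 \<in> free_carrier r"
  by (simp add: carrier_iff)
lemma carrier_single: "set (letters w) \<subseteq> {1..<r} \<Longrightarrow> Poly_Mapping.single w c \<in> free_carrier r"
  by (simp add: carrier_iff)
lemma carrier_fconst[simp]: "fconst c \<in> free_carrier r"
  by (simp add: fconst_def carrier_iff)
lemma carrier_1[simp]: "(1::'r::comm_ring_1 freealg) \<in> free_carrier r"
  using carrier_fconst[of "1::'r" r] by simp
lemma carrier_gen: "1 \<le> i \<Longrightarrow> i < r \<Longrightarrow> (gen i :: 'r::comm_ring_1 freealg) \<in> free_carrier r"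
  by (simp add: gen_def carrier_iff)
lemma carrier_add[simp]: "f \<in> free_carrier r \<Longrightarrow> g \<in> free_carrier r \<Longrightarrow> (f + g :: 'r::comm_ring_1 freealg) \<in> free_carrier r"
  using keys_add[of f g] by (auto simp: carrier_iff)
lemma carrier_uminus[simp]: "f \<in> free_carrier r \<Longrightarrow> (- f :: 'r::comm_ring_1 freealg) \<in> free_carrier r"
  by (simp add: carrier_iff)
lemma carrier_diff[simp]: "f \<in> free_carrier r \<Longrightarrow> g \<in> free_carrier r \<Longrightarrow> (f - g :: 'r::comm_ring_1 freealg) \<in> free_carrier r"
  using carrier_add[of f r "-g"] by simp
lemma carrier_mult[simp]: "f \<in> free_carrier r \<Longrightarrow> g \<in> free_carrier r \<Longrightarrow> (f * g :: 'r::comm_ring_1 freealg) \<in> free_carrier r"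
  using keys_mult[of f g] unfolding carrier_iff by fastforce
lemma carrier_sum: "(\<And>x. x \<in> S \<Longrightarrow> f x \<in> free_carrier r) \<Longrightarrow> (\<Sum>x\<in>S. f x :: 'r::comm_ring_1 freealg) \<in> free_carrier r"
  by (induction S rule: infinite_finite_induct) auto
lemma carrier_prod_list: "(\<And>x. x \<in> set xs \<Longrightarrow> x \<in> free_carrier r) \<Longrightarrow> (prod_list xs :: 'r::comm_ring_1 freealg) \<in> free_carrier r"
  by (induction xs) auto
lemma fconst_numeral: "fconst (numeral n :: 'r::comm_ring_1) = numeral n"
  by (simp add: fconst_def zero_word_def[symmetric])
lemma carrier_numeral[simp]: "(numeral n :: 'r::comm_ring_1 freealg) \<in> free_carrier r"
  using carrier_fconst[of "numeral n :: 'r" r] by (simp add: fconst_numeral)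

lemma ideal_rel: "g \<in> hecke_relators q qi r \<Longrightarrow> g \<in> hecke_ideal q qi r"
  using hecke_ideal.gen[of g q qi r 1 1] by simp

lemma ideal_lmult: "x \<in> hecke_ideal q qi r \<Longrightarrow> c \<in> free_carrier r \<Longrightarrow> c * x \<in> hecke_ideal q qi r"
proof (induction rule: hecke_ideal.induct)
  case zero then show ?case by (simp add: hecke_ideal.zero)
next
  case (gen g a b) then show ?case using hecke_ideal.gen[of g q qi r "c*a" b] by (simp add: mult.assoc)
next
  case (add x y) then show ?case by (simp add: distrib_left hecke_ideal.add)
qed

lemma ideal_rmult: "x \<in> hecke_ideal q qi r \<Longrightarrow> c \<in> free_carrier r \<Longrightarrow> x * c \<in> hecke_ideal q qi r"
proof (induction rule: hecke_ideal.induct)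
  case zero then show ?case by (simp add: hecke_ideal.zero)
next
  case (gen g a b) then show ?case using hecke_ideal.gen[of g q qi r a "b*c"] by (simp add: mult.assoc)
next
  case (add x y) then show ?case by (simp add: distrib_right hecke_ideal.add)
qed

lemma ideal_uminus: "x \<in> hecke_ideal q qi r \<Longrightarrow> - x \<in> hecke_ideal q qi r"
  using ideal_lmult[of x q qi r "-1"] by simp

lemma ideal_add: "x \<in> hecke_ideal q qi r \<Longrightarrow> y \<in> hecke_ideal q qi r \<Longrightarrow> x + y \<in> hecke_ideal q qi r"
  by (rule hecke_ideal.add)

lemma ideal_diff: "x \<in> hecke_ideal q qi r \<Longrightarrow> y \<in> hecke_ideal q qi r \<Longrightarrow> x - y \<in> hecke_ideal q qi r"
  using ideal_add[OF _ ideal_uminus, of x q qi r y] by simp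

lemma ideal_0: "0 \<in> hecke_ideal q qi r" by (rule hecke_ideal.zero)

lemma ideal_lrmult: "x \<in> hecke_ideal q qi r \<Longrightarrow> c \<in> free_carrier r \<Longrightarrow> d \<in> free_carrier r \<Longrightarrow> c * x * d \<in> hecke_ideal q qi r"
  by (intro ideal_rmult ideal_lmult)

lemma word_eval_plus: "word_eval phi (a + b) = word_eval phi a * word_eval phi b"
  by (simp add: word_eval_def)

lemma free_eval_superset:
  assumes "finite S" "Poly_Mapping.keys f \<subseteq> S"
  shows "free_eval phi f = (\<Sum>w\<in>S. fconst (Poly_Mapping.lookup f w) * word_eval phi w)"
  unfolding free_eval_def
  by (rule sum.mono_neutral_left) (use assms in \<open>auto simp: in_keys_iff\<close>)

lemma free_eval_add: "free_eval phi (f + g) = free_eval phi f + free_eval phi g"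
proof -
  let ?S = "Poly_Mapping.keys f \<union> Poly_Mapping.keys g"
  have "free_eval phi (f + g) = (\<Sum>w\<in>?S. fconst (Poly_Mapping.lookup (f+g) w) * word_eval phi w)"
    by (rule free_eval_superset) (use keys_add[of f g] in auto)
  also have "\<dots> = (\<Sum>w\<in>?S. fconst (Poly_Mapping.lookup f w) * word_eval phi w)
                 + (\<Sum>w\<in>?S. fconst (Poly_Mapping.lookup g w) * word_eval phi w)"
    by (simp add: lookup_add fconst_add[symmetric] distrib_right sum.distrib)
  also have "\<dots> = free_eval phi f + free_eval phi g"
    by (subst (1 2) free_eval_superset[symmetric]) auto
  finally show ?thesis .
qed

lemma free_eval_0[simp]: "free_eval phi 0 = 0"
  by (simp add: free_eval_def)

lemma free_eval_uminus: "free_eval phi (- f) = - free_eval phi f"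
  using free_eval_add[of phi "-f" f] by (simp add: eq_neg_iff_add_eq_0)

lemma free_eval_diff: "free_eval phi (f - g) = free_eval phi f - free_eval phi g"
  using free_eval_add[of phi f "-g"] by (simp add: free_eval_uminus)

lemma free_eval_single: "free_eval phi (Poly_Mapping.single w c) = fconst c * word_eval phi w"
  by (subst free_eval_superset[of "{w}"]) auto

lemma free_eval_sum: "free_eval phi (\<Sum>x\<in>S. f x) = (\<Sum>x\<in>S. free_eval phi (f x))"
  by (induction S rule: infinite_finite_induct) (auto simp: free_eval_add)

lemma free_eval_single_mult:
  "free_eval phi (Poly_Mapping.single w c * Poly_Mapping.single v d)
   = free_eval phi (Poly_Mapping.single w c) * free_eval phi (Poly_Mapping.single v d)"
proof -
  have "free_eval phi (Poly_Mapping.single w c * Poly_Mapping.single v d)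
       = fconst c * fconst d * (word_eval phi w * word_eval phi v)"
    by (simp add: mult_single free_eval_single word_eval_plus fconst_mult)
  also have "\<dots> = fconst c * word_eval phi w * (fconst d * word_eval phi v)"
    by (metis fconst_central mult.assoc)
  finally show ?thesis by (simp add: free_eval_single)
qed

lemma free_eval_mult: "free_eval phi (f * g) = free_eval phi f * free_eval phi g"
proof -
  have "f * g = (\<Sum>k\<in>Poly_Mapping.keys f. \<Sum>l\<in>Poly_Mapping.keys g.
      Poly_Mapping.single k (Poly_Mapping.lookup f k) * Poly_Mapping.single l (Poly_Mapping.lookup g l))"
    by (subst (1) poly_sum_single[of f], subst (1) poly_sum_single[of g])
       (simp add: sum_distrib_left sum_distrib_right, rule sum.swap)
  then have "free_eval phi (f * g) = (\<Sum>k\<in>Poly_Mapping.keys f. \<Sum>l\<in>Poly_Mapping.keys g.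
      free_eval phi (Poly_Mapping.single k (Poly_Mapping.lookup f k)) * free_eval phi (Poly_Mapping.single l (Poly_Mapping.lookup g l)))"
    by (simp add: free_eval_sum free_eval_single_mult)
  also have "\<dots> = free_eval phi (\<Sum>k\<in>Poly_Mapping.keys f. Poly_Mapping.single k (Poly_Mapping.lookup f k))
     * free_eval phi (\<Sum>l\<in>Poly_Mapping.keys g. Poly_Mapping.single l (Poly_Mapping.lookup g l))"
    by (simp add: free_eval_sum sum_distrib_left sum_distrib_right, rule sum.swap)
  finally show ?thesis by (simp flip: poly_sum_single)
qed

lemma free_eval_fconst[simp]: "free_eval phi (fconst c) = fconst c"
  by (simp add: fconst_def free_eval_single word_eval_def)

lemma free_eval_1[simp]: "free_eval phi (1::'r::comm_ring_1 freealg) = 1"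
  using free_eval_fconst[of phi "1::'r"] by simp

lemma free_eval_gen[simp]: "free_eval phi (gen i) = phi i"
  by (simp add: gen_def free_eval_single word_eval_def)

lemma free_eval_numeral[simp]: "free_eval phi (numeral n :: 'r::comm_ring_1 freealg) = numeral n"
  using free_eval_fconst[of phi "numeral n :: 'r"] by (simp add: fconst_def zero_word_def[symmetric])

lemma free_eval_prod_list: "free_eval phi (prod_list xs) = prod_list (map (free_eval phi) xs)"
  by (induction xs) (auto simp: free_eval_mult)

lemma free_eval_carrier:
  assumes "\<And>i. 1 \<le> i \<Longrightarrow> i < r \<Longrightarrow> phi i \<in> free_carrier r" "f \<in> free_carrier r"
  shows "free_eval phi f \<in> free_carrier r"
  unfolding free_eval_def word_eval_def
proof (intro carrier_sum carrier_mult carrier_fconst carrier_prod_list)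
  fix w x assume w: "w \<in> Poly_Mapping.keys f" and x: "x \<in> set (map phi (letters w))"
  then obtain i where "i \<in> set (letters w)" "x = phi i" by auto
  moreover have "set (letters w) \<subseteq> {1..<r}" using assms(2) w by (simp add: carrier_iff)
  ultimately show "x \<in> free_carrier r" using assms(1) by auto
qed

lemma prod_list_gens: "prod_list (map gen xs) = (Poly_Mapping.single (Word xs) 1 :: 'r::comm_ring_1 freealg)"
proof (induction xs)
  case Nil then show ?case by (simp add: zero_word_def[symmetric])
next
  case (Cons i xs)
  have "Word [i] + Word xs = Word (i # xs)" by simp
  then show ?case using Cons by (simp add: gen_def mult_single)
qed

lemma single_gens: "Poly_Mapping.single w d = fconst (d::'r::comm_ring_1) * prod_list (map gen (letters w))"
  by (cases w) (simp add: prod_list_gens fconst_single)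

context
  fixes q qi :: "'r::comm_ring_1"
begin

abbreviation "G \<equiv> goldman q qi"

lemma g_add: "G (x + y) = G x + G y" by (simp add: goldman_def free_eval_add)
lemma g_diff: "G (x - y) = G x - G y" by (simp add: goldman_def free_eval_diff)
lemma g_uminus: "G (- x) = - G x" by (simp add: goldman_def free_eval_uminus)
lemma g_mult: "G (x * y) = G x * G y" by (simp add: goldman_def free_eval_mult)
lemma g_fconst[simp]: "G (fconst c) = fconst c" by (simp add: goldman_def)
lemma g_1[simp]: "G 1 = 1" by (simp add: goldman_def)
lemma g_numeral[simp]: "G (numeral n) = numeral n" by (simp add: goldman_def)
lemma g_gen[simp]: "G (gen i) = fconst (q - qi) - gen i" by (simp add: goldman_def)
lemma g_sum: "G (\<Sum>x\<in>S. f x) = (\<Sum>x\<in>S. G (f x))" by (simp add: goldman_def free_eval_sum)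
lemma g_prod_list: "G (prod_list xs) = prod_list (map G xs)" by (induction xs) (simp_all add: g_mult)

lemma g_invol_single: "G (G (Poly_Mapping.single w d)) = Poly_Mapping.single w d"
proof -
  have "G (Poly_Mapping.single w d) = fconst d * prod_list (map (\<lambda>i. fconst (q - qi) - gen i) (letters w))"
    by (simp add: goldman_def free_eval_single word_eval_def)
  then have "G (G (Poly_Mapping.single w d)) = fconst d * prod_list (map (\<lambda>i. G (fconst (q - qi) - gen i)) (letters w))"
    by (simp add: g_mult g_prod_list o_def)
  also have "\<dots> = fconst d * prod_list (map gen (letters w))"
    by (simp add: g_diff)
  finally show ?thesis by (simp add: single_gens)
qed

lemma g_invol: "G (G x) = x"
  by (subst (1 2) poly_sum_single[of x]) (simp add: g_sum g_invol_single)

lemma g_carrier: "x \<in> free_carrier r \<Longrightarrow> G x \<in> free_carrier r"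
  unfolding goldman_def by (rule free_eval_carrier) (auto intro!: carrier_diff carrier_gen)

lemma ring_id1:
  fixes A C :: "'a::ring_1"
  assumes "C * A = A * C"
  shows "(C - A) * (C - A) - (C * (C - A) + 1) = A * A - (C * A + 1)"
  using assms by (simp add: algebra_simps)

lemma ring_id2:
  fixes A B C :: "'a::ring_1"
  assumes "C * A = A * C" "C * B = B * C"
  shows "(C - A) * (C - B) * (C - A) - (C - B) * (C - A) * (C - B)
       = - (A * B * A - B * A * B) + C * (A * A - (C * A + 1)) - C * (B * B - (C * B + 1))"
proof -
  have e1: "A * (C * X) = C * (A * X)" for X using assms by (metis mult.assoc)
  have e2: "B * (C * X) = C * (B * X)" for X using assms by (metis mult.assoc)
  show ?thesis using assms[symmetric] by (simp add: algebra_simps e1 e2)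
qed

lemma ring_id3:
  fixes A B C :: "'a::ring_1"
  assumes "C * A = A * C" "C * B = B * C"
  shows "(C - A) * (C - B) - (C - B) * (C - A) = A * B - B * A"
proof -
  have e1: "A * (C * X) = C * (A * X)" for X using assms by (metis mult.assoc)
  have e2: "B * (C * X) = C * (B * X)" for X using assms by (metis mult.assoc)
  show ?thesis using assms[symmetric] by (simp add: algebra_simps e1 e2)
qed

lemma g_relator: "g \<in> hecke_relators q qi r \<Longrightarrow> G g \<in> hecke_ideal q qi r"
proof -
  let ?C = "fconst (q - qi) :: 'r freealg"
  assume rel: "g \<in> hecke_relators q qi r"
  then consider (a) i where "g = gen i * gen i - (?C * gen i + 1)" "1 \<le> i" "i < r"
    | (b) i where "g = gen i * gen (i+1) * gen i - gen (i+1) * gen i * gen (i+1)" "1 \<le> i" "i + 1 < r"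
    | (c) i j where "g = gen i * gen j - gen j * gen i" "1 \<le> i" "i < r" "1 \<le> j" "j < r" "i + 1 < j \<or> j + 1 < i"
    unfolding hecke_relators_def by blast
  then show ?thesis
  proof cases
    case a
    have "G g = g" using a(1) ring_id1[OF fconst_central] by (simp add: g_diff g_mult g_add)
    then show ?thesis using ideal_rel[OF rel] by simp
  next
    case b
    let ?A = "gen i :: 'r freealg" and ?B = "gen (i+1) :: 'r freealg"
    have ra: "?A * ?A - (?C * ?A + 1) \<in> hecke_ideal q qi r"
      using b by (intro ideal_rel) (auto simp: hecke_relators_def)
    have rb: "?B * ?B - (?C * ?B + 1) \<in> hecke_ideal q qi r"
      using b by (intro ideal_rel) (auto simp: hecke_relators_def)
    have rg: "g \<in> hecke_ideal q qi r"
      using b by (intro ideal_rel) (auto simp: hecke_relators_def)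
    have "G g = - g + ?C * (?A * ?A - (?C * ?A + 1)) - ?C * (?B * ?B - (?C * ?B + 1))"
      using b(1) ring_id2[OF fconst_central fconst_central] by (simp add: g_diff g_mult g_add)
    then show ?thesis
      by (simp only:) (intro ideal_diff ideal_add ideal_uminus ideal_lmult rg ra rb carrier_fconst)
  next
    case c
    have "G g = g" using c(1) ring_id3[OF fconst_central fconst_central] by (simp add: g_diff g_mult)
    then show ?thesis using ideal_rel[OF rel] by simp
  qed
qed

lemma g_ideal: "x \<in> hecke_ideal q qi r \<Longrightarrow> G x \<in> hecke_ideal q qi r"
proof (induction rule: hecke_ideal.induct)
  case zero then show ?case by (simp add: goldman_def ideal_0)
next
  case (gen g a b) then show ?case
    by (simp add: g_mult) (intro ideal_lrmult g_relator g_carrier)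
next
  case (add x y) then show ?case by (simp add: g_add ideal_add)
qed

end

lemma ring_idT:
  fixes E C W g :: "'a::ring_1"
  assumes "E * g = g * E" "C * g = g * C" "W * g = g * W" "E * C = C * E" "E * W = W * E" "C * W = W * C" and ww: "W * W = W + W"
  shows "(E * (W * g - C)) * (E * (W * g - C)) - 1 = ((W + W) * (E * E)) * (g * g - (C * g + 1)) + (E * E * (C * C + W + W) - 1)"
proof -
  have e1: "g * (E * X) = E * (g * X)" for X using assms by (metis mult.assoc)
  have e2: "g * (C * X) = C * (g * X)" for X using assms by (metis mult.assoc)
  have e3: "C * (E * X) = E * (C * X)" for X using assms by (metis mult.assoc)
  have e4: "g * (W * X) = W * (g * X)" for X using assms by (metis mult.assoc)
  have e5: "W * (E * X) = E * (W * X)" for X using assms by (metis mult.assoc)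
  have e6: "W * (C * X) = C * (W * X)" for X using assms by (metis mult.assoc)
  have e7: "W * (W * X) = W * X + W * X" for X using ww by (metis mult.assoc distrib_right)
  show ?thesis using assms(1-6)[symmetric] ww by (simp add: algebra_simps e1 e2 e3 e4 e5 e6 e7)
qed

lemma ideal_eqI: "x = y \<Longrightarrow> y \<in> hecke_ideal q qi r \<Longrightarrow> x \<in> hecke_ideal q qi r" by simp

context
  fixes q qi e :: "'a::idom" and r :: nat and t :: 'a
  assumes r2: "r \<ge> 2"
    and qinv: "q * qi = 1"
    and tinv: "2 * t = 1"
    and einv: "e * (q + qi) = 1"
begin

abbreviation "T \<equiv> Tprime e q qi"
abbreviation "I \<equiv> hecke_ideal q qi r"
abbreviation "Car \<equiv> (free_carrier r :: 'a freealg set)"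

lemma gen1_car: "(gen 1 :: 'a freealg) \<in> Car" using r2 by (intro carrier_gen) auto

lemma T_car: "T \<in> Car"
  unfolding Tprime_def using gen1_car by simp

lemma G_T: "goldman q qi T = - T"
  unfolding Tprime_def
  by (simp add: g_mult g_diff g_add mult_2 algebra_simps)

lemma TT: "T * T - 1 \<in> I"
proof -
  let ?E = "fconst e :: 'a freealg" and ?C = "fconst (q - qi) :: 'a freealg" and ?W = "fconst 2 :: 'a freealg"
  let ?g = "gen 1 :: 'a freealg"
  have ww: "?W * ?W = ?W + ?W" by (simp add: fconst_mult fconst_add)
  have sc: "e * e * ((q - qi) * (q - qi) + 2 + 2) = 1"
  proof -
    have "(q - qi) * (q - qi) + 2 + 2 = (q + qi) * (q + qi)" using qinv by (simp add: algebra_simps)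
    then have "e * e * ((q - qi) * (q - qi) + 2 + 2) = (e * (q + qi)) * (e * (q + qi))" by (simp add: algebra_simps)
    then show ?thesis using einv by simp
  qed
  have "?E * ?E * (?C * ?C + ?W + ?W) = fconst (e * e * ((q - qi) * (q - qi) + 2 + 2))"
    by (simp add: fconst_mult fconst_add)
  also have "\<dots> = 1" using sc by simp
  finally have z0: "?E * ?E * (?C * ?C + ?W + ?W) = 1" .
  then have z: "?E * ?E * (?C * ?C + ?W + ?W) - 1 = 0" by simp
  have "T * T - 1 = ((?W + ?W) * (?E * ?E)) * (?g * ?g - (?C * ?g + 1)) + (?E * ?E * (?C * ?C + ?W + ?W) - 1)"
    unfolding Tprime_def fconst_numeral[symmetric]
    by (rule ring_idT) (rule fconst_central | rule ww)+
  also have "\<dots> = ((?W + ?W) * (?E * ?E)) * (?g * ?g - (?C * ?g + 1))" using z by simp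
  moreover have "?g * ?g - (?C * ?g + 1) \<in> hecke_relators q qi r"
    unfolding hecke_relators_def by (intro UnI1 CollectI exI[of _ 1]) (use r2 in auto)
  ultimately show ?thesis
    by (simp only:) (intro ideal_lmult ideal_rel carrier_mult carrier_add carrier_fconst)
qed

lemma TT_l: "d \<in> Car \<Longrightarrow> T * T * d - d \<in> I"
  using ideal_rmult[OF TT, of d] by (simp add: algebra_simps)
lemma TT_r: "d \<in> Car \<Longrightarrow> d * (T * T) - d \<in> I"
  using ideal_lmult[OF TT, of d] by (simp add: algebra_simps)
lemma TT_lr: "d \<in> Car \<Longrightarrow> T * T * d * (T * T) - d \<in> I"
proof -
  assume d: "d \<in> Car"
  have "T * T * d * (T * T) - d = (T * T * d * (T * T) - T * T * d) + (T * T * d - d)" by simp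
  moreover have "T * T * d * (T * T) - T * T * d = (T * T * d) * (T * T) - (T * T * d)" by simp
  ultimately show ?thesis using d T_car by (metis TT_l TT_r carrier_mult ideal_add)
qed

definition inH1 where "inH1 a \<longleftrightarrow> a \<in> Car \<and> goldman q qi a - a \<in> I"

lemma hecke1_iff: "a \<in> hecke1 q qi r \<longleftrightarrow> inH1 a"
  by (simp add: hecke1_def inH1_def hecke_eq_def)

lemma H1_add: "inH1 a \<Longrightarrow> inH1 b \<Longrightarrow> inH1 (a + b)"
  unfolding inH1_def using ideal_add by (fastforce simp: g_add algebra_simps)

lemma H1_diff: "inH1 a \<Longrightarrow> inH1 b \<Longrightarrow> inH1 (a - b)"
  unfolding inH1_def using ideal_diff by (fastforce simp: g_diff algebra_simps)

lemma H1_mult: "inH1 a \<Longrightarrow> inH1 b \<Longrightarrow> inH1 (a * b)"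
proof -
  assume a: "inH1 a" and b: "inH1 b"
  have "goldman q qi (a * b) - a * b = (goldman q qi a - a) * goldman q qi b + a * (goldman q qi b - b)"
    by (simp add: g_mult algebra_simps)
  moreover have "(goldman q qi a - a) * goldman q qi b \<in> I"
    using a b by (intro ideal_rmult g_carrier) (auto simp: inH1_def)
  moreover have "a * (goldman q qi b - b) \<in> I"
    using a b by (intro ideal_lmult) (auto simp: inH1_def)
  ultimately show ?thesis using a b by (auto simp: inH1_def intro: ideal_add)
qed

lemma H1_TaT: "inH1 a \<Longrightarrow> inH1 (T * a * T)"
proof -
  assume a: "inH1 a"
  have "goldman q qi (T * a * T) - T * a * T = T * (goldman q qi a - a) * T"
    by (simp add: g_mult G_T algebra_simps)
  then show ?thesis using a T_car by (auto simp: inH1_def intro!: ideal_lrmult)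
qed

lemma H1_fconst: "inH1 a \<Longrightarrow> inH1 (fconst c * a)"
proof -
  assume a: "inH1 a"
  have "goldman q qi (fconst c * a) - fconst c * a = fconst c * (goldman q qi a - a)"
    by (simp add: g_mult algebra_simps)
  then show ?thesis using a by (auto simp: inH1_def intro!: ideal_lmult)
qed

lemma H1_0: "inH1 0" by (simp add: inH1_def goldman_def ideal_0)

lemma direct:
  assumes d1: "inH1 d1" and d2: "inH1 d2" and s: "d1 + d2 * T \<in> I"
  shows "d1 \<in> I \<and> d2 \<in> I"
proof -
  let ?G = "goldman q qi"
  have gs: "?G d1 - ?G d2 * T \<in> I" using g_ideal[OF s] by (simp add: g_add g_mult G_T)
  have m: "d1 - d2 * T \<in> I"
  proof -
    have "d1 - d2 * T = (?G d1 - ?G d2 * T) - (?G d1 - d1) + (?G d2 - d2) * T"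
      by (simp add: algebra_simps)
    moreover have i1: "?G d1 - d1 \<in> I" and i2: "?G d2 - d2 \<in> I" using d1 d2 by (auto simp: inH1_def)
    ultimately show ?thesis
      by (simp only:) (rule ideal_add[OF ideal_diff[OF gs i1] ideal_rmult[OF i2 T_car]])
  qed
  have "d1 + d1 \<in> I" using ideal_add[OF s m] by simp
  then have "fconst t * (d1 + d1) \<in> I" by (intro ideal_lmult) auto
  moreover have "fconst t * (d1 + d1) = d1"
  proof -
    have "fconst t * (d1 + d1) = (fconst t + fconst t) * d1" by (simp add: algebra_simps)
    also have "fconst t + fconst t = 1" proof -
      have "fconst t + fconst t = fconst (2 * t)" by (simp only: fconst_add mult_2)
      then show ?thesis using tinv by simp
    qed
    finally show ?thesis by simp
  qed
  ultimately have i1: "d1 \<in> I" by simp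
  have "d2 * T \<in> I" using ideal_diff[OF s i1] by simp
  then have a: "d2 * T * T \<in> I" using T_car by (rule ideal_rmult)
  then have a': "d2 * (T * T) \<in> I" by (simp add: mult.assoc)
  have b: "d2 * (T * T) - d2 \<in> I" using d2 by (intro TT_r) (simp add: inH1_def)
  have "d2 * (T * T) - (d2 * (T * T) - d2) \<in> I" by (rule ideal_diff[OF a' b])
  then have "d2 \<in> I" by simp
  with i1 show ?thesis ..
qed

lemma decomp:
  assumes h: "h \<in> Car"
  shows "\<exists>a1 a2. inH1 a1 \<and> inH1 a2 \<and> h - (a1 + a2 * T) \<in> I"
proof -
  let ?G = "goldman q qi"
  define a1 where "a1 = fconst t * (h + ?G h)"
  define a2 where "a2 = fconst t * (h - ?G h) * T"
  have Gh: "?G h \<in> Car" using h by (rule g_carrier)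
  have "inH1 a1" unfolding inH1_def a1_def using h Gh
    by (simp add: g_mult g_add g_invol ideal_0 add.commute)
  moreover have "inH1 a2" unfolding inH1_def a2_def using h Gh T_car
    by (simp add: g_mult g_diff g_invol G_T ideal_0 algebra_simps)
  moreover have "h - (a1 + a2 * T) \<in> I"
  proof -
    have tt: "fconst t + fconst t = (1 :: 'a freealg)" proof -
      have "fconst t + fconst t = fconst (2 * t)" by (simp only: fconst_add mult_2)
      then show ?thesis using tinv by simp
    qed
    have "h - (a1 + a2 * T) = (fconst t + fconst t) * h - (a1 + a2 * T)" using tt by simp
    also have "\<dots> = - (fconst t * (h - ?G h) * (T * T - 1))"
      unfolding a1_def a2_def by (simp add: algebra_simps)
    finally show ?thesis using h Gh T_car
      by (simp only:) (intro ideal_uminus ideal_lmult TT carrier_mult carrier_diff carrier_fconst)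
  qed
  ultimately show ?thesis by blast
qed


lemma Z2_ball: "(\<forall>\<sigma>\<in>Z2. P \<sigma>) \<longleftrightarrow> P 1 \<and> P (-1)"
  by (simp add: Z2_def)

lemma psi_1[simp]: "psi0 T 1 X = X" by (simp add: psi0_def)
lemma psi_m1[simp]: "psi0 T (-1) X = T * X * T" by (simp add: psi0_def)

lemma cpC: "x \<in> cp_carrier Z2 A \<longleftrightarrow> x 1 \<in> A \<and> x (-1) \<in> A \<and> (\<forall>\<sigma>. \<sigma> \<noteq> 1 \<and> \<sigma> \<noteq> -1 \<longrightarrow> x \<sigma> = 0)"
  by (auto simp: cp_carrier_def Z2_def)

lemma cpm: "cp_mult Z2 (psi0 T) alpha0 x y \<rho> =
   (if \<rho> = 1 then x 1 * y 1 + x (-1) * (T * y (-1) * T)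
    else if \<rho> = -1 then x 1 * y (-1) + x (-1) * (T * y 1 * T) else 0)"
  by (simp add: cp_mult_def Z2_def alpha0_def)

lemma H1_car: "inH1 a \<Longrightarrow> a \<in> Car" by (simp add: inH1_def)

lemma main:
  "(\<forall>\<sigma>\<in>Z2. \<forall>a\<in>hecke1 q qi r. psi0 (Tprime e q qi) \<sigma> a \<in> hecke1 q qi r)
   \<and> (\<forall>\<sigma>\<in>Z2. \<forall>a\<in>hecke1 q qi r. \<forall>b\<in>hecke1 q qi r. hecke_eq q qi r a b \<longrightarrow> hecke_eq q qi r (psi0 (Tprime e q qi) \<sigma> a) (psi0 (Tprime e q qi) \<sigma> b))
   \<and> (\<forall>\<sigma>\<in>Z2. \<forall>a\<in>hecke1 q qi r. \<forall>b\<in>hecke1 q qi r. hecke_eq q qi r (psi0 (Tprime e q qi) \<sigma> (a + b)) (psi0 (Tprime e q qi) \<sigma> a + psi0 (Tprime e q qi) \<sigma> b))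
   \<and> (\<forall>\<sigma>\<in>Z2. \<forall>a\<in>hecke1 q qi r. \<forall>b\<in>hecke1 q qi r. hecke_eq q qi r (psi0 (Tprime e q qi) \<sigma> (a * b)) (psi0 (Tprime e q qi) \<sigma> a * psi0 (Tprime e q qi) \<sigma> b))
   \<and> (\<forall>\<sigma>\<in>Z2. \<forall>c. \<forall>a\<in>hecke1 q qi r. hecke_eq q qi r (psi0 (Tprime e q qi) \<sigma> (fconst c * a)) (fconst c * psi0 (Tprime e q qi) \<sigma> a))
   \<and> (\<forall>\<sigma>\<in>Z2. hecke_eq q qi r (psi0 (Tprime e q qi) \<sigma> 1) 1)
   \<and> (\<forall>\<sigma>\<in>Z2. \<forall>a\<in>hecke1 q qi r. \<forall>b\<in>hecke1 q qi r. hecke_eq q qi r (psi0 (Tprime e q qi) \<sigma> a) (psi0 (Tprime e q qi) \<sigma> b) \<longrightarrow> hecke_eq q qi r a b)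
   \<and> (\<forall>\<sigma>\<in>Z2. \<forall>b\<in>hecke1 q qi r. \<exists>a\<in>hecke1 q qi r. hecke_eq q qi r (psi0 (Tprime e q qi) \<sigma> a) b)
   \<and> (\<forall>\<sigma>\<in>Z2. \<forall>\<tau>\<in>Z2. \<forall>a\<in>hecke1 q qi r.
        hecke_eq q qi r (psi0 (Tprime e q qi) \<sigma> (psi0 (Tprime e q qi) \<tau> a)) (alpha0 \<sigma> \<tau> * psi0 (Tprime e q qi) (\<sigma> * \<tau>) a * alpha0 \<sigma> \<tau>))
   \<and> (\<forall>x\<in>cp_carrier Z2 (hecke1 q qi r). \<forall>y\<in>cp_carrier Z2 (hecke1 q qi r). cp_mult Z2 (psi0 (Tprime e q qi)) alpha0 x y \<in> cp_carrier Z2 (hecke1 q qi r))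
   \<and> (\<forall>x\<in>cp_carrier Z2 (hecke1 q qi r). \<forall>y\<in>cp_carrier Z2 (hecke1 q qi r). (\<forall>\<sigma>\<in>Z2. hecke_eq q qi r (x \<sigma>) (y \<sigma>)) \<longrightarrow> hecke_eq q qi r (Phi (Tprime e q qi) x) (Phi (Tprime e q qi) y))
   \<and> (\<forall>x\<in>cp_carrier Z2 (hecke1 q qi r). Phi (Tprime e q qi) x \<in> free_carrier r)
   \<and> (\<forall>x\<in>cp_carrier Z2 (hecke1 q qi r). \<forall>y\<in>cp_carrier Z2 (hecke1 q qi r). Phi (Tprime e q qi) (cp_add x y) = Phi (Tprime e q qi) x + Phi (Tprime e q qi) y)
   \<and> (\<forall>c. \<forall>x\<in>cp_carrier Z2 (hecke1 q qi r). Phi (Tprime e q qi) (cp_smult c x) = fconst c * Phi (Tprime e q qi) x)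
   \<and> (\<forall>x\<in>cp_carrier Z2 (hecke1 q qi r). \<forall>y\<in>cp_carrier Z2 (hecke1 q qi r). hecke_eq q qi r (Phi (Tprime e q qi) (cp_mult Z2 (psi0 (Tprime e q qi)) alpha0 x y)) (Phi (Tprime e q qi) x * Phi (Tprime e q qi) y))
   \<and> Phi (Tprime e q qi) cp_one = 1
   \<and> (\<forall>x\<in>cp_carrier Z2 (hecke1 q qi r). \<forall>y\<in>cp_carrier Z2 (hecke1 q qi r). hecke_eq q qi r (Phi (Tprime e q qi) x) (Phi (Tprime e q qi) y) \<longrightarrow> (\<forall>\<sigma>\<in>Z2. hecke_eq q qi r (x \<sigma>) (y \<sigma>)))
   \<and> (\<forall>h\<in>free_carrier r. \<exists>x\<in>cp_carrier Z2 (hecke1 q qi r). hecke_eq q qi r (Phi (Tprime e q qi) x) h)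
   \<and> (\<forall>h\<in>free_carrier r. \<exists>a1\<in>hecke1 q qi r. \<exists>a2\<in>hecke1 q qi r. hecke_eq q qi r h (a1 + a2 * Tprime e q qi))
   \<and> (\<forall>a1\<in>hecke1 q qi r. \<forall>a2\<in>hecke1 q qi r. \<forall>b1\<in>hecke1 q qi r. \<forall>b2\<in>hecke1 q qi r.
        hecke_eq q qi r (a1 + a2 * Tprime e q qi) (b1 + b2 * Tprime e q qi) \<longrightarrow> hecke_eq q qi r a1 b1 \<and> hecke_eq q qi r a2 b2)"
  (is "?P1 \<and> ?P2 \<and> ?P3 \<and> ?P4 \<and> ?P5 \<and> ?P6 \<and> ?P7 \<and> ?P8 \<and> ?P9 \<and> ?P10 \<and> ?P11 \<and> ?P12 \<and> ?P13 \<and> ?P14 \<and> ?P15 \<and> ?P16 \<and> ?P17 \<and> ?P18 \<and> ?P19 \<and> ?P20")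
proof -
  note Tc = T_car
  have p1: ?P1 by (simp add: Z2_ball hecke1_iff H1_TaT)
  have p2: ?P2
  proof -
    have "T * a * T - T * b * T \<in> I" if "a - b \<in> I" for a b
    proof -
      have "T * a * T - T * b * T = T * (a - b) * T" by (simp add: algebra_simps)
      then show ?thesis using that Tc by (simp add: ideal_lrmult)
    qed
    then show ?thesis by (simp add: Z2_ball hecke_eq_def)
  qed
  have p3: ?P3 by (simp add: Z2_ball hecke_eq_def algebra_simps ideal_0)
  have p4: ?P4
  proof -
    have "T * (a * b) * T - T * a * T * (T * b * T) \<in> I" if "inH1 a" "inH1 b" for a b
    proof -
      have "T * (a * b) * T - T * a * T * (T * b * T) = - ((T * a) * (T * T - 1) * (b * T))"
        by (simp add: algebra_simps)
      then show ?thesis using that Tc H1_car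
        by (simp only:) (intro ideal_uminus ideal_lrmult TT carrier_mult)
    qed
    then show ?thesis by (simp add: Z2_ball hecke_eq_def hecke1_iff ideal_0)
  qed
  have p5: ?P5
  proof -
    have "T * (fconst c * a) * T = fconst c * (T * a * T)" for c a
      by (metis fconst_central mult.assoc)
    then show ?thesis by (simp add: Z2_ball hecke_eq_def ideal_0)
  qed
  have p6: ?P6 using TT by (simp add: Z2_ball hecke_eq_def ideal_0)
  have p7: ?P7
  proof -
    have "a - b \<in> I" if "inH1 a" "inH1 b" "T * a * T - T * b * T \<in> I" for a b
    proof -
      have d: "a - b \<in> Car" using that H1_car by simp
      have "T * (T * a * T - T * b * T) * T \<in> I" using that Tc by (intro ideal_lrmult)
      moreover have "T * (T * a * T - T * b * T) * T = T * T * (a - b) * (T * T)" by (simp add: algebra_simps)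
      ultimately have "T * T * (a - b) * (T * T) \<in> I" by simp
      from ideal_diff[OF this TT_lr[OF d]] show ?thesis by simp
    qed
    then show ?thesis by (simp add: Z2_ball hecke_eq_def hecke1_iff)
  qed
  have p8: ?P8
  proof -
    have "\<exists>a. inH1 a \<and> T * a * T - b \<in> I" if "inH1 b" for b
    proof (intro exI conjI)
      show "inH1 (T * b * T)" using that by (rule H1_TaT)
      have "T * (T * b * T) * T = T * T * b * (T * T)" by (simp add: algebra_simps)
      then show "T * (T * b * T) * T - b \<in> I" using TT_lr[OF H1_car[OF that]] by simp
    qed
    note ex = this
    show ?thesis
    proof (unfold Z2_ball, intro conjI ballI)
      fix b assume b: "b \<in> hecke1 q qi r"
      show "\<exists>a\<in>hecke1 q qi r. hecke_eq q qi r (psi0 T 1 a) b"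
        using b by (intro bexI[of _ b]) (simp_all add: hecke_eq_def ideal_0)
    next
      fix b assume b: "b \<in> hecke1 q qi r"
      then obtain a where a: "inH1 a" "T * a * T - b \<in> I" using ex hecke1_iff by blast
      show "\<exists>a\<in>hecke1 q qi r. hecke_eq q qi r (psi0 T (-1) a) b"
        using a by (intro bexI[of _ a]) (simp_all add: hecke_eq_def hecke1_iff)
    qed
  qed
  have p9: ?P9
  proof -
    have "T * (T * a * T) * T - a \<in> I" if "inH1 a" for a
    proof -
      have "T * (T * a * T) * T = T * T * a * (T * T)" by (simp add: algebra_simps)
      then show ?thesis using TT_lr[OF H1_car[OF that]] by simp
    qed
    then show ?thesis by (simp add: Z2_ball hecke_eq_def hecke1_iff ideal_0 alpha0_def)
  qed
  have p10: ?P10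
  proof (intro ballI)
    fix x y assume x: "x \<in> cp_carrier Z2 (hecke1 q qi r)" and y: "y \<in> cp_carrier Z2 (hecke1 q qi r)"
    then have h: "inH1 (x 1)" "inH1 (x (-1))" "inH1 (y 1)" "inH1 (y (-1))"
      by (auto simp: cpC hecke1_iff)
    show "cp_mult Z2 (psi0 T) alpha0 x y \<in> cp_carrier Z2 (hecke1 q qi r)"
      unfolding cpC hecke1_iff cpm using h
      by (auto intro!: H1_add H1_mult H1_TaT)
  qed
  have p11: ?P11
  proof (intro ballI impI)
    fix x y assume x: "x \<in> cp_carrier Z2 (hecke1 q qi r)" and y: "y \<in> cp_carrier Z2 (hecke1 q qi r)"
      and "\<forall>\<sigma>\<in>Z2. hecke_eq q qi r (x \<sigma>) (y \<sigma>)"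
    then have a: "x 1 - y 1 \<in> I" "x (-1) - y (-1) \<in> I" by (auto simp: Z2_ball hecke_eq_def)
    have "Phi T x - Phi T y = (x 1 - y 1) + (x (-1) - y (-1)) * T" by (simp add: Phi_def algebra_simps)
    then show "hecke_eq q qi r (Phi T x) (Phi T y)" unfolding hecke_eq_def
      using a Tc by (simp add: ideal_add ideal_rmult)
  qed
  have p12: ?P12 using Tc by (auto simp: cpC hecke1_iff Phi_def intro!: carrier_add carrier_mult dest: H1_car)
  have p13: ?P13 by (simp add: Phi_def cp_add_def algebra_simps)
  have p14: ?P14 by (simp add: Phi_def cp_smult_def algebra_simps)
  have p15: ?P15
  proof (intro ballI)
    fix x y assume x: "x \<in> cp_carrier Z2 (hecke1 q qi r)" and y: "y \<in> cp_carrier Z2 (hecke1 q qi r)"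
    then have h: "inH1 (x 1)" "inH1 (x (-1))" "inH1 (y 1)" "inH1 (y (-1))"
      by (auto simp: cpC hecke1_iff)
    have "Phi T (cp_mult Z2 (psi0 T) alpha0 x y) - Phi T x * Phi T y = (x (-1) * T * y 1) * (T * T - 1)"
      by (simp add: Phi_def cpm algebra_simps)
    then show "hecke_eq q qi r (Phi T (cp_mult Z2 (psi0 T) alpha0 x y)) (Phi T x * Phi T y)"
      unfolding hecke_eq_def using h Tc H1_car
      by (simp only:) (intro ideal_lmult TT carrier_mult)
  qed
  have p16: ?P16 by (simp add: Phi_def cp_one_def)
  have p17: ?P17
  proof (rule ballI, rule ballI, rule impI)
    fix x y assume x: "x \<in> cp_carrier Z2 (hecke1 q qi r)" and y: "y \<in> cp_carrier Z2 (hecke1 q qi r)"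
      and e: "hecke_eq q qi r (Phi T x) (Phi T y)"
    then have h: "inH1 (x 1)" "inH1 (x (-1))" "inH1 (y 1)" "inH1 (y (-1))"
      by (auto simp: cpC hecke1_iff)
    have "Phi T x - Phi T y = (x 1 - y 1) + (x (-1) - y (-1)) * T" by (simp add: Phi_def algebra_simps)
    then have "(x 1 - y 1) + (x (-1) - y (-1)) * T \<in> I" using e by (simp add: hecke_eq_def)
    from direct[OF H1_diff[OF h(1,3)] H1_diff[OF h(2,4)] this]
    show "\<forall>\<sigma>\<in>Z2. hecke_eq q qi r (x \<sigma>) (y \<sigma>)" by (simp add: Z2_ball hecke_eq_def)
  qed
  have p18: ?P18
  proof
    fix h :: "'a freealg" assume h: "h \<in> free_carrier r"
    obtain a1 a2 where a: "inH1 a1" "inH1 a2" "h - (a1 + a2 * T) \<in> I" using decomp[OF h] by blast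
    define x where "x = (\<lambda>\<sigma>::int. if \<sigma> = 1 then a1 else if \<sigma> = -1 then a2 else 0)"
    have "x \<in> cp_carrier Z2 (hecke1 q qi r)" using a by (simp add: x_def cpC hecke1_iff)
    moreover have "Phi T x - h \<in> I"
    proof -
      have "Phi T x - h = - (h - (a1 + a2 * T))" by (simp add: x_def Phi_def)
      then show ?thesis using ideal_uminus[OF a(3)] by (simp only:)
    qed
    ultimately show "\<exists>x\<in>cp_carrier Z2 (hecke1 q qi r). hecke_eq q qi r (Phi T x) h"
      by (auto simp: hecke_eq_def)
  qed
  have p19: ?P19 using decomp by (fastforce simp: hecke1_iff hecke_eq_def)
  have p20: ?P20
  proof (intro ballI impI)
    fix a1 a2 b1 b2 assume h: "a1 \<in> hecke1 q qi r" "a2 \<in> hecke1 q qi r" "b1 \<in> hecke1 q qi r" "b2 \<in> hecke1 q qi r"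
      and e: "hecke_eq q qi r (a1 + a2 * T) (b1 + b2 * T)"
    have "(a1 - b1) + (a2 - b2) * T \<in> I"
    proof -
      have "(a1 - b1) + (a2 - b2) * T = (a1 + a2 * T) - (b1 + b2 * T)" by (simp add: algebra_simps)
      then show ?thesis using e unfolding hecke_eq_def by (simp only:)
    qed
    from direct[OF H1_diff H1_diff this] h
    show "hecke_eq q qi r a1 b1 \<and> hecke_eq q qi r a2 b2" by (simp add: hecke_eq_def hecke1_iff)
  qed
  show ?thesis using p1 p2 p3 p4 p5 p6 p7 p8 p9 p10 p11 p12 p13 p14 p15 p16 p17 p18 p19 p20
    by blast
qed

end

theorem theorem3p9:
  fixes q qi e :: "'r::idom" and r :: nat
  assumes r2: "r \<ge> 2"
    and qinv: "q * qi = 1"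
    and two_unit: "\<exists>t::'r. 2 * t = 1"
    and einv: "e * (q + qi) = 1"
  defines "eq \<equiv> hecke_eq q qi r"
    and "H \<equiv> free_carrier r :: 'r freealg set"
    and "H1 \<equiv> hecke1 q qi r"
    and "T' \<equiv> Tprime e q qi"
    and "\<psi> \<equiv> psi0 (Tprime e q qi)"
    and "C \<equiv> cp_carrier Z2 (hecke1 q qi r)"
    and "cpeq \<equiv> (\<lambda>x y. \<forall>\<sigma>\<in>Z2. hecke_eq q qi r (x \<sigma>) (y \<sigma>))"
  shows
    \<comment> \<open>(H^1, Z_2, psi_0, alpha_0) is a crossed system: each psi_0(sigma) is an
        R_0-algebra automorphism of H^1 and psi_0(s)psi_0(t) = alpha psi_0(st) alpha^{-1}\<close>
    "(\<forall>\<sigma>\<in>Z2. \<forall>a\<in>H1. \<psi> \<sigma> a \<in> H1)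
   \<and> (\<forall>\<sigma>\<in>Z2. \<forall>a\<in>H1. \<forall>b\<in>H1. eq a b \<longrightarrow> eq (\<psi> \<sigma> a) (\<psi> \<sigma> b))
   \<and> (\<forall>\<sigma>\<in>Z2. \<forall>a\<in>H1. \<forall>b\<in>H1. eq (\<psi> \<sigma> (a + b)) (\<psi> \<sigma> a + \<psi> \<sigma> b))
   \<and> (\<forall>\<sigma>\<in>Z2. \<forall>a\<in>H1. \<forall>b\<in>H1. eq (\<psi> \<sigma> (a * b)) (\<psi> \<sigma> a * \<psi> \<sigma> b))
   \<and> (\<forall>\<sigma>\<in>Z2. \<forall>c. \<forall>a\<in>H1. eq (\<psi> \<sigma> (fconst c * a)) (fconst c * \<psi> \<sigma> a))
   \<and> (\<forall>\<sigma>\<in>Z2. eq (\<psi> \<sigma> 1) 1)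
   \<and> (\<forall>\<sigma>\<in>Z2. \<forall>a\<in>H1. \<forall>b\<in>H1. eq (\<psi> \<sigma> a) (\<psi> \<sigma> b) \<longrightarrow> eq a b)
   \<and> (\<forall>\<sigma>\<in>Z2. \<forall>b\<in>H1. \<exists>a\<in>H1. eq (\<psi> \<sigma> a) b)
   \<and> (\<forall>\<sigma>\<in>Z2. \<forall>\<tau>\<in>Z2. \<forall>a\<in>H1.
        eq (\<psi> \<sigma> (\<psi> \<tau> a)) (alpha0 \<sigma> \<tau> * \<psi> (\<sigma> * \<tau>) a * alpha0 \<sigma> \<tau>))
   \<and> (\<forall>x\<in>C. \<forall>y\<in>C. cp_mult Z2 \<psi> alpha0 x y \<in> C)
   \<and> (\<forall>x\<in>C. \<forall>y\<in>C. cpeq x y \<longrightarrow> eq (Phi T' x) (Phi T' y))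
   \<and> (\<forall>x\<in>C. Phi T' x \<in> H)
   \<and> (\<forall>x\<in>C. \<forall>y\<in>C. Phi T' (cp_add x y) = Phi T' x + Phi T' y)
   \<and> (\<forall>c. \<forall>x\<in>C. Phi T' (cp_smult c x) = fconst c * Phi T' x)
   \<and> (\<forall>x\<in>C. \<forall>y\<in>C. eq (Phi T' (cp_mult Z2 \<psi> alpha0 x y)) (Phi T' x * Phi T' y))
   \<and> Phi T' cp_one = 1
   \<and> (\<forall>x\<in>C. \<forall>y\<in>C. eq (Phi T' x) (Phi T' y) \<longrightarrow> cpeq x y)
   \<and> (\<forall>h\<in>H. \<exists>x\<in>C. eq (Phi T' x) h)
   \<and> (\<forall>h\<in>H. \<exists>a1\<in>H1. \<exists>a2\<in>H1. eq h (a1 + a2 * T'))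
   \<and> (\<forall>a1\<in>H1. \<forall>a2\<in>H1. \<forall>b1\<in>H1. \<forall>b2\<in>H1.
        eq (a1 + a2 * T') (b1 + b2 * T') \<longrightarrow> eq a1 b1 \<and> eq a2 b2)"
proof -
  obtain t :: 'r where t: "2 * t = 1" using two_unit by blast
  show ?thesis
    unfolding eq_def H_def H1_def T'_def \<psi>_def C_def cpeq_def
    by (rule main[OF r2 qinv t einv])
qed

end
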